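(* Let $X$ be a $*$-bimodule for a unital complex $*$-algebra $A$, let $F$ be a hermitian linear functional on $X$ (i.e. $F(x^+)=\overline{F(x)}$) and let $f$ be a positive linear functional on $A$. Suppose that for each $x\in X$ there is a constant $C_x>0$ such that $$|F(a^+\cdot x)|^2\le C_x\, f(a^+a)\quad\text{for all } a\in A.$$ Let $\rho_f$ be the GNS representation of $f$ on $\mathcal{D}_f$ with cyclic vector $\varphi_f$. Then there exists a $*$-representation $(\theta_F,\rho_f)$ of the $*$-bimodule $X$ on $\mathcal{D}_f$ such that $$F(a\cdot x\cdot b)=\langle\theta_F(x)\rho_f(b)\varphi_f,\rho_f(a^+)\varphi_f\rangle\quad\text{for all } a,b\in A,\ x\in X.$$ Moreover, if $(\theta,\rho)$ is another $*$-representation of $X$ on a complex inner product space $(\mathcal{D},(\cdot,\cdot))$ with Hilbert space completion $\mathcal{H}$ and $\psi\in\mathcal{D}$ satisfies $\rho(A)\psi=\mathcal{D}$, $f(a)=(\rho(a)\psi,\psi)$ for $a\in A$, and $F(a\cdot x\cdot b)=(\theta(x)\rho(b)\psi,\rho(a^+)\psi)$ for all $a,b\in A$, $x\in X$, then there is a unitary operator $U:\mathcal{H}_f\to\mathcal{H}$ with $U\varphi_f=\psi$, $U\mathcal{D}_f=\mathcal{D}$, $\rho(a)=U\rho_f(a)U^{-1}$ and $\theta(x)=U\theta_F(x)U^{-1}$ for all $a\in A$, $x\in X$.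
   Context: A $*$-bimodule $X$ for $A$: a complex $A$-bimodule (unital left and right $A$-module with $(a\cdot x)\cdot b=a\cdot(x\cdot b)$) with conjugate-linear involution $x\mapsto x^+$, $(x^+)^+=x$, satisfying $(a\cdot x\cdot b)^+=b^+\cdot x^+\cdot a^+$. For a complex inner product space $\mathcal{D}$ with completion $\mathcal{H}$, $\mathcal{L}^+(\mathcal{D},\mathcal{H})$ is the set of linear operators $t:\mathcal{D}\to\mathcal{H}$ with $\mathcal{D}(t^* )\supseteq\mathcal{D}$, $t^+:=t^*|_{\mathcal{D}}$. A $*$-representation of $A$ on $\mathcal{D}$ is an algebra homomorphism $\rho$ into linear operators on $\mathcal{D}$ with $\langle\rho(a)\varphi,\psi\rangle=\langle\varphi,\rho(a^+)\psi\rangle$, nondegenerate if $\rho(1)=I$. A $*$-representation of $X$ on $\mathcal{D}$ is a pair $(\theta,\rho)$ with $\rho$ a nondegenerate $*$-representation of $A$ on $\mathcal{D}$ and $\theta:X\to\mathcal{L}^+(\mathcal{D},\mathcal{H})$ linear with $\theta(x^+)=\theta(x)^+$ and $\langle\theta(a\cdot x\cdot b)\varphi,\psi\rangle=\langle\theta(x)\rho(b)\varphi,\rho(a^+)\psi\rangle$ for all $a,b\in A$, $x\in X$, $\varphi,\psi\in\mathcal{D}$. GNS representation of a positive functional $f$ (i.e. $f(a^+a)\ge0$): $\mathcal{N}_f=\{a\in A: f(a^+a)=0\}$, $\mathcal{D}_f=A/\mathcal{N}_f$ with inner product $\langle a+\mathcal{N}_f,b+\mathcal{N}_f\rangle=f(b^+a)$,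 $\rho_f(a)(b+\mathcal{N}_f)=ab+\mathcal{N}_f$, $\varphi_f=1+\mathcal{N}_f$ (so $\mathcal{D}_f=\rho_f(A)\varphi_f$ and $f(a^+b)=\langle\rho_f(b)\varphi_f,\rho_f(a)\varphi_f\rangle$); $\mathcal{H}_f$ is the completion of $\mathcal{D}_f$. *)

theory Defs
  imports Complex_Main
begin

class cvec = ab_group_add +
  fixes scaleC :: "complex \<Rightarrow> 'a \<Rightarrow> 'a"
  assumes scaleC_add_right: "scaleC c (x + y) = scaleC c x + scaleC c y"
    and scaleC_add_left: "scaleC (c + d) x = scaleC c x + scaleC d x"
    and scaleC_scaleC: "scaleC c (scaleC d x) = scaleC (c * d) x"
    and scaleC_one: "scaleC 1 x = x"

class cinner_space = cvec +
  fixes cinner :: "'a \<Rightarrow> 'a \<Rightarrow> complex"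
  assumes cinner_add_left: "cinner (x + y) z = cinner x z + cinner y z"
    and cinner_scaleC_left: "cinner (scaleC c x) y = c * cinner x y"
    and cinner_commute: "cinner y x = cnj (cinner x y)"
    and cinner_ge_zero: "0 \<le> Re (cinner x x)"
    and cinner_eq_zero: "cinner x x = 0 \<Longrightarrow> x = 0"

definition cnorm :: "'a::cinner_space \<Rightarrow> real" where
  "cnorm x = sqrt (Re (cinner x x))"

class chilbert = cinner_space +
  assumes complete:
    "(\<forall>e>0. \<exists>N::nat. \<forall>m\<ge>N. \<forall>n\<ge>N. sqrt (Re (cinner (s m - s n) (s m - s n))) < e)
       \<Longrightarrow> (\<exists>l. \<forall>e>0. \<exists>N::nat. \<forall>n\<ge>N. sqrt (Re (cinner (s n - l) (s n - l))) < e)"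

text \<open>Unital complex *-algebra (the unit is the 1 of monoid_mult; the zero algebra is allowed).\<close>
class cstar_algebra = cvec + ring + monoid_mult +
  fixes star :: "'a \<Rightarrow> 'a"
  assumes scaleC_mult_left: "scaleC c (a * b) = scaleC c a * b"
    and scaleC_mult_right: "scaleC c (a * b) = a * scaleC c b"
    and star_star: "star (star a) = a"
    and star_add: "star (a + b) = star a + star b"
    and star_scaleC: "star (scaleC c a) = scaleC (cnj c) (star a)"
    and star_mult: "star (a * b) = star b * star a"

definition star_bimodule ::
  "('a::cstar_algebra \<Rightarrow> 'x::cvec \<Rightarrow> 'x) \<Rightarrow> ('x \<Rightarrow> 'a \<Rightarrow> 'x) \<Rightarrow> ('x \<Rightarrow> 'x) \<Rightarrow> bool" where
  "star_bimodule lact ract xst \<longleftrightarrow>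
     (\<forall>a x y. lact a (x + y) = lact a x + lact a y) \<and>
     (\<forall>a b x. lact (a + b) x = lact a x + lact b x) \<and>
     (\<forall>c a x. lact (scaleC c a) x = scaleC c (lact a x)) \<and>
     (\<forall>c a x. lact a (scaleC c x) = scaleC c (lact a x)) \<and>
     (\<forall>a b x. lact (a * b) x = lact a (lact b x)) \<and>
     (\<forall>x. lact 1 x = x) \<and>
     (\<forall>a x y. ract (x + y) a = ract x a + ract y a) \<and>
     (\<forall>a b x. ract x (a + b) = ract x a + ract x b) \<and>
     (\<forall>c a x. ract x (scaleC c a) = scaleC c (ract x a)) \<and>
     (\<forall>c a x. ract (scaleC c x) a = scaleC c (ract x a)) \<and>
     (\<forall>a b x. ract x (a * b) = ract (ract x a) b) \<and>
     (\<forall>x. ract x 1 = x) \<and>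
     (\<forall>a x b. ract (lact a x) b = lact a (ract x b)) \<and>
     (\<forall>x. xst (xst x) = x) \<and>
     (\<forall>x y. xst (x + y) = xst x + xst y) \<and>
     (\<forall>c x. xst (scaleC c x) = scaleC (cnj c) (xst x)) \<and>
     (\<forall>a x b. xst (lact a (ract x b)) = lact (star b) (ract (xst x) (star a)))"

definition clinear_functional :: "('v::cvec \<Rightarrow> complex) \<Rightarrow> bool" where
  "clinear_functional g \<longleftrightarrow> (\<forall>x y. g (x + y) = g x + g y) \<and> (\<forall>c x. g (scaleC c x) = c * g x)"

definition positive_functional :: "('a::cstar_algebra \<Rightarrow> complex) \<Rightarrow> bool" where
  "positive_functional f \<longleftrightarrow> (\<forall>a. Im (f (star a * a)) = 0 \<and> 0 \<le> Re (f (star a * a)))"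

definition csubspace :: "'h::cvec set \<Rightarrow> bool" where
  "csubspace D \<longleftrightarrow> 0 \<in> D \<and> (\<forall>u\<in>D. \<forall>v\<in>D. u + v \<in> D) \<and> (\<forall>c. \<forall>u\<in>D. scaleC c u \<in> D)"

definition cdense :: "'h::cinner_space set \<Rightarrow> bool" where
  "cdense D \<longleftrightarrow> (\<forall>v. \<forall>e>0. \<exists>d\<in>D. cnorm (v - d) < e)"

text \<open>A complex inner product space D together with its Hilbert space completion H
  is modelled as a dense subspace D of a Hilbert space H (the type).\<close>
definition dense_domain :: "'h::chilbert set \<Rightarrow> bool" where
  "dense_domain D \<longleftrightarrow> csubspace D \<and> cdense D"

definition clinear_on :: "'h::cvec set \<Rightarrow> ('h \<Rightarrow> 'k::cvec) \<Rightarrow> bool" where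
  "clinear_on D t \<longleftrightarrow> (\<forall>u\<in>D. \<forall>v\<in>D. t (u + v) = t u + t v) \<and> (\<forall>c. \<forall>u\<in>D. t (scaleC c u) = scaleC c (t u))"

definition adj_domain :: "'h::chilbert set \<Rightarrow> ('h \<Rightarrow> 'h) \<Rightarrow> 'h set" where
  "adj_domain D t = {\<psi>. \<exists>\<eta>. \<forall>\<phi>\<in>D. cinner (t \<phi>) \<psi> = cinner \<phi> \<eta>}"

definition adjoint :: "'h::chilbert set \<Rightarrow> ('h \<Rightarrow> 'h) \<Rightarrow> 'h \<Rightarrow> 'h" where
  "adjoint D t \<psi> = (THE \<eta>. \<forall>\<phi>\<in>D. cinner (t \<phi>) \<psi> = cinner \<phi> \<eta>)"

text \<open>L^+(D,H): linear t : D -> H with D contained in the domain of t*.  t^+ := t* restricted to D.\<close>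
definition Lplus :: "'h::chilbert set \<Rightarrow> ('h \<Rightarrow> 'h) \<Rightarrow> bool" where
  "Lplus D t \<longleftrightarrow> clinear_on D t \<and> D \<subseteq> adj_domain D t"

text \<open>Nondegenerate *-representation of A on D (operators identified with their action on D).\<close>
definition star_rep :: "'h::chilbert set \<Rightarrow> ('a::cstar_algebra \<Rightarrow> 'h \<Rightarrow> 'h) \<Rightarrow> bool" where
  "star_rep D \<rho> \<longleftrightarrow>
     (\<forall>a. \<forall>v\<in>D. \<rho> a v \<in> D) \<and>
     (\<forall>a. clinear_on D (\<rho> a)) \<and>
     (\<forall>a b. \<forall>v\<in>D. \<rho> (a + b) v = \<rho> a v + \<rho> b v) \<and>
     (\<forall>c a. \<forall>v\<in>D. \<rho> (scaleC c a) v = scaleC c (\<rho> a v)) \<and>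
     (\<forall>a b. \<forall>v\<in>D. \<rho> (a * b) v = \<rho> a (\<rho> b v)) \<and>
     (\<forall>a. \<forall>\<phi>\<in>D. \<forall>\<psi>\<in>D. cinner (\<rho> a \<phi>) \<psi> = cinner \<phi> (\<rho> (star a) \<psi>))"

definition nondegenerate :: "'h::chilbert set \<Rightarrow> ('a::cstar_algebra \<Rightarrow> 'h \<Rightarrow> 'h) \<Rightarrow> bool" where
  "nondegenerate D \<rho> \<longleftrightarrow> (\<forall>v\<in>D. \<rho> 1 v = v)"

definition bimod_star_rep ::
  "('a::cstar_algebra \<Rightarrow> 'x::cvec \<Rightarrow> 'x) \<Rightarrow> ('x \<Rightarrow> 'a \<Rightarrow> 'x) \<Rightarrow> ('x \<Rightarrow> 'x) \<Rightarrow>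
   'h::chilbert set \<Rightarrow> ('x \<Rightarrow> 'h \<Rightarrow> 'h) \<Rightarrow> ('a \<Rightarrow> 'h \<Rightarrow> 'h) \<Rightarrow> bool" where
  "bimod_star_rep lact ract xst D \<theta> \<rho> \<longleftrightarrow>
     star_rep D \<rho> \<and> nondegenerate D \<rho> \<and>
     (\<forall>x y. \<forall>v\<in>D. \<theta> (x + y) v = \<theta> x v + \<theta> y v) \<and>
     (\<forall>c x. \<forall>v\<in>D. \<theta> (scaleC c x) v = scaleC c (\<theta> x v)) \<and>
     (\<forall>x. Lplus D (\<theta> x)) \<and>
     (\<forall>x. \<forall>\<psi>\<in>D. \<theta> (xst x) \<psi> = adjoint D (\<theta> x) \<psi>) \<and>
     (\<forall>a b x. \<forall>\<phi>\<in>D. \<forall>\<psi>\<in>D.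
        cinner (\<theta> (lact a (ract x b)) \<phi>) \<psi> = cinner (\<theta> x (\<rho> b \<phi>)) (\<rho> (star a) \<psi>))"

text \<open>q is the quotient map A -> D_f = A/N_f composed with the isometric embedding of
  D_f into its Hilbert space completion H_f (the type 'h): q is linear,
  <q a, q b> = f(b^+ a) (so ker q = N_f and the inner product is the GNS one), and
  D_f = range q is dense in H_f.\<close>
definition gns_completion :: "('a::cstar_algebra \<Rightarrow> complex) \<Rightarrow> ('a \<Rightarrow> 'h::chilbert) \<Rightarrow> bool" where
  "gns_completion f q \<longleftrightarrow>
     (\<forall>a b. q (a + b) = q a + q b) \<and> (\<forall>c a. q (scaleC c a) = scaleC c (q a)) \<and>
     (\<forall>a b. cinner (q a) (q b) = f (star b * a)) \<and> cdense (range q)"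

text \<open>rho_f(a)(b + N_f) = ab + N_f.\<close>
definition gns_rep :: "('a::cstar_algebra \<Rightarrow> 'h::chilbert) \<Rightarrow> 'a \<Rightarrow> 'h \<Rightarrow> 'h" where
  "gns_rep q a v = q (a * (SOME b. q b = v))"

definition gns_vec :: "('a::cstar_algebra \<Rightarrow> 'h::chilbert) \<Rightarrow> 'h" where
  "gns_vec q = q 1"

definition cunitary :: "('h::chilbert \<Rightarrow> 'k::chilbert) \<Rightarrow> bool" where
  "cunitary U \<longleftrightarrow> bij U \<and> (\<forall>u v. U (u + v) = U u + U v) \<and> (\<forall>c u. U (scaleC c u) = scaleC c (U u)) \<and>
     (\<forall>u v. cinner (U u) (U v) = cinner u v)"

end

theory Submission
  imports Defs
begin


context cvec begin
lemma scaleC_zero_left[simp]: "scaleC 0 x = 0"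
proof -
  have "scaleC 0 x = scaleC 0 x + scaleC 0 x" using scaleC_add_left[of 0 0 x] by simp
  thus ?thesis by simp
qed
lemma scaleC_minus_one: "scaleC (-1) x = - x"
proof -
  have "scaleC (-1) x + x = 0" using scaleC_add_left[of "-1" 1 x] by (simp add: scaleC_one)
  thus ?thesis by (simp add: eq_neg_iff_add_eq_0)
qed
lemma scaleC_zero_right[simp]: "scaleC c 0 = 0"
proof -
  have "scaleC c 0 = scaleC c 0 + scaleC c 0" using scaleC_add_right[of c 0 0] by simp
  thus ?thesis by simp
qed
lemma scaleC_minus_right: "scaleC c (- x) = - scaleC c x"
proof -
  have "scaleC c (-x) + scaleC c x = 0" using scaleC_add_right[of c "-x" x] by simp
  thus ?thesis by (simp add: eq_neg_iff_add_eq_0)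
qed
lemma scaleC_diff_right: "scaleC c (x - y) = scaleC c x - scaleC c y"
  using scaleC_add_right[of c x "-y"] by (simp add: scaleC_minus_right)
lemma scaleC_minus_left: "scaleC (- c) x = - scaleC c x"
proof -
  have "scaleC (-c) x + scaleC c x = 0" using scaleC_add_left[of "-c" c x] by simp
  thus ?thesis by (simp add: eq_neg_iff_add_eq_0)
qed
lemma scaleC_diff_left: "scaleC (c - d) x = scaleC c x - scaleC d x"
  using scaleC_add_left[of c "-d" x] by (simp add: scaleC_minus_left)
end

lemma cinner_zero_left[simp]: "cinner (0::'a::cinner_space) y = 0"
  using cinner_add_left[of 0 0 y] by simp
lemma cinner_minus_left: "cinner (-x) y = - cinner x y"
proof -
  have "cinner (-x) y + cinner x y = 0" using cinner_add_left[of "-x" x y] by simp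
  thus ?thesis by (rule eq_neg_iff_add_eq_0[THEN iffD2])
qed
lemma cinner_diff_left: "cinner (x - z) y = cinner x y - cinner z y"
  using cinner_add_left[of x "-z" y] by (simp add: cinner_minus_left)
lemma cinner_add_right: "cinner x (y + z) = cinner x y + cinner x z"
  by (subst (1 2 3) cinner_commute) (simp add: cinner_add_left)
lemma cinner_scaleC_right: "cinner x (scaleC c y) = cnj c * cinner x y"
  by (subst (1 2) cinner_commute) (simp add: cinner_scaleC_left)
lemma cinner_zero_right[simp]: "cinner x 0 = 0"
  by (subst cinner_commute) simp
lemma cinner_minus_right: "cinner x (-y) = - cinner x y"
proof -
  have "cinner x (-y) + cinner x y = 0" using cinner_add_right[of x "-y" y] by simp
  thus ?thesis by (rule eq_neg_iff_add_eq_0[THEN iffD2])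
qed
lemma cinner_diff_right: "cinner x (y - z) = cinner x y - cinner x z"
  using cinner_add_right[of x y "-z"] by (simp add: cinner_minus_right)
lemma cinner_self_Im: "Im (cinner x x) = 0"
proof -
  have "cinner x x = cnj (cinner x x)" by (rule cinner_commute)
  from arg_cong[OF this, of Im] show ?thesis by simp
qed
lemma cinner_self_real: "cinner x x = complex_of_real (Re (cinner x x))"
  using cinner_self_Im complex_eq_iff by auto
lemma cinner_self_eq_zero[simp]: "cinner x x = 0 \<longleftrightarrow> x = 0"
  using cinner_eq_zero by auto


lemma cauchy_schwarz2: "(cmod (cinner (x::'a::cinner_space) y))\<^sup>2 \<le> Re (cinner x x) * Re (cinner y y)"
proof (cases "y = 0")
  case True thus ?thesis by simp
next
  case False
  define r where "r = Re (cinner y y)"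
  define z where "z = cinner x y"
  define t where "t = z / complex_of_real r"
  have ryy: "cinner y y = complex_of_real r" unfolding r_def using cinner_self_real .
  have "r \<noteq> 0" using False ryy cinner_self_eq_zero[of y] by auto
  hence r0: "r > 0" using cinner_ge_zero[of y] unfolding r_def by linarith
  have yx: "cinner y x = cnj z" unfolding z_def by (rule cinner_commute)
  have e0: "cinner (x - scaleC t y) (x - scaleC t y)
      = cinner x x - cnj t * cinner x y - (t * cinner y x - t * cnj t * cinner y y)"
    apply (simp only: cinner_diff_left cinner_diff_right cinner_scaleC_left cinner_scaleC_right)
    by (simp add: algebra_simps)
  have e: "cinner (x - scaleC t y) (x - scaleC t y)
      = cinner x x - cnj t * z - (t * cnj z - t * cnj t * complex_of_real r)"
    unfolding e0 yx ryy z_def ..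
  have rne: "complex_of_real r \<noteq> 0" using r0 by simp
  have zz: "z * cnj z = complex_of_real ((cmod z)^2)" by (rule complex_norm_square[symmetric])
  have 1: "t * cnj z - t * cnj t * complex_of_real r = 0"
    unfolding t_def using rne by (simp add: field_simps)
  have 2: "cnj t * z = complex_of_real ((cmod z)^2 / r)"
    unfolding t_def using zz by (simp add: field_simps mult.commute)
  have "Re (cinner (x - scaleC t y) (x - scaleC t y)) = Re (cinner x x) - (cmod z)^2 / r"
    unfolding e 1 2 by simp
  hence "(cmod z)^2 / r \<le> Re (cinner x x)" using cinner_ge_zero by (metis diff_ge_0_iff_ge)
  thus ?thesis using r0 unfolding z_def r_def by (simp add: field_simps mult.commute)
qed

lemma cnorm_ge0: "cnorm x \<ge> 0" using cinner_ge_zero[of x] by (simp add: cnorm_def)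
lemma cnorm_sq: "(cnorm (x::'a::cinner_space))\<^sup>2 = Re (cinner x x)"
  using cinner_ge_zero[of x] by (simp add: cnorm_def)
lemma cinner_le_cnorm: "cmod (cinner x y) \<le> cnorm x * cnorm y"
proof -
  have "(cmod (cinner x y))\<^sup>2 \<le> (cnorm x * cnorm y)\<^sup>2"
    using cauchy_schwarz2[of x y] by (simp add: power_mult_distrib cnorm_sq)
  thus ?thesis using cnorm_ge0 by (meson mult_nonneg_nonneg power2_le_imp_le)
qed
lemma cnorm_zero[simp]: "cnorm 0 = 0" by (simp add: cnorm_def)
lemma cnorm_eq_zero: "cnorm x = 0 \<longleftrightarrow> x = 0"
  by (metis cinner_eq_zero cinner_self_real cnorm_def cnorm_zero of_real_0 real_sqrt_eq_zero_cancel_iff)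
lemma cnorm_triangle: "cnorm (x + y) \<le> cnorm x + cnorm y"
proof -
  have "Re (cinner (x+y) (x+y)) = Re (cinner x x) + Re (cinner y y) + 2 * Re (cinner x y)"
    by (simp add: cinner_add_left cinner_add_right cinner_commute[of y x])
  also have "\<dots> \<le> (cnorm x)^2 + (cnorm y)^2 + 2 * (cnorm x * cnorm y)"
    using cinner_le_cnorm[of x y] abs_Re_le_cmod[of "cinner x y"] by (simp add: cnorm_sq)
  also have "\<dots> = (cnorm x + cnorm y)^2" by (simp add: power2_eq_square algebra_simps)
  finally have "(cnorm (x+y))^2 \<le> (cnorm x + cnorm y)^2" by (simp add: cnorm_sq)
  thus ?thesis using cnorm_ge0 by (meson add_nonneg_nonneg power2_le_imp_le)
qed
lemma cnorm_minus_commute: "cnorm (x - y) = cnorm (y - x)"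
  by (simp add: cnorm_def cinner_diff_left cinner_diff_right algebra_simps)
lemma cnorm_triangle_diff: "cnorm (x - z) \<le> cnorm (x - y) + cnorm (y - z)"
  using cnorm_triangle[of "x - y" "y - z"] by simp


lemma cnorm_scaleC: "cnorm (scaleC c x) = cmod c * cnorm x"
proof -
  have "cinner (scaleC c x) (scaleC c x) = (c * cnj c) * cinner x x"
    by (simp add: cinner_scaleC_left cinner_scaleC_right mult.assoc)
  also have "\<dots> = complex_of_real ((cmod c)^2) * complex_of_real (Re (cinner x x))"
    by (subst cinner_self_real) (simp only: complex_norm_square)
  finally have "Re (cinner (scaleC c x) (scaleC c x)) = (cmod c)^2 * Re (cinner x x)"
    by (simp only: Re_complex_of_real of_real_mult[symmetric])
  thus ?thesis unfolding cnorm_def by (simp add: real_sqrt_mult)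
qed


lemma null_comp:
  fixes f :: "nat \<Rightarrow> 'b::real_normed_vector"
  assumes "\<And>n. norm (f n) \<le> g n" "g \<longlonglongrightarrow> 0" shows "f \<longlonglongrightarrow> 0"
proof -
  have "norm (f n) \<le> norm (g n) * 1" for n using assms(1)[of n] abs_ge_self[of "g n"] by simp
  hence "eventually (\<lambda>n. norm (f n) \<le> norm (g n) * 1) sequentially" by (intro always_eventually allI)
  thus ?thesis by (rule tendsto_0_le[OF assms(2)])
qed

definition conv :: "(nat \<Rightarrow> 'a::cinner_space) \<Rightarrow> 'a \<Rightarrow> bool" where
  "conv s l \<longleftrightarrow> (\<lambda>n. cnorm (s n - l)) \<longlonglongrightarrow> 0"
definition ccauchy :: "(nat \<Rightarrow> 'a::cinner_space) \<Rightarrow> bool" where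
  "ccauchy s \<longleftrightarrow> (\<forall>e>0. \<exists>N. \<forall>m\<ge>N. \<forall>n\<ge>N. cnorm (s m - s n) < e)"

lemma conv_complete:
  fixes s :: "nat \<Rightarrow> 'h::chilbert"
  assumes "ccauchy s" shows "\<exists>l. conv s l"
proof -
  from chilbert_class.complete[of s] assms obtain l where
    l: "\<forall>e>0. \<exists>N::nat. \<forall>n\<ge>N. sqrt (Re (cinner (s n - l) (s n - l))) < e"
    unfolding ccauchy_def cnorm_def by blast
  have "conv s l" unfolding conv_def
  proof (rule LIMSEQ_I)
    fix r :: real assume "0 < r"
    then obtain N where "\<forall>n\<ge>N. cnorm (s n - l) < r" using l unfolding cnorm_def by blast
    thus "\<exists>no. \<forall>n\<ge>no. norm (cnorm (s n - l) - 0) < r" by (auto simp: abs_of_nonneg cnorm_ge0)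
  qed
  thus ?thesis by blast
qed

lemma conv_D: "conv s l \<Longrightarrow> e > 0 \<Longrightarrow> \<exists>N. \<forall>n\<ge>N. cnorm (s n - l) < e"
  unfolding conv_def using LIMSEQ_D[of "\<lambda>n. cnorm (s n - l)" 0 e] by (auto simp: abs_of_nonneg cnorm_ge0)

lemma conv_cauchy: assumes "conv s l" shows "ccauchy s"
  unfolding ccauchy_def
proof (intro allI impI)
  fix e :: real assume "e > 0"
  then obtain N where N: "\<forall>n\<ge>N. cnorm (s n - l) < e/2" using conv_D[OF assms, of "e/2"] by auto
  show "\<exists>N. \<forall>m\<ge>N. \<forall>n\<ge>N. cnorm (s m - s n) < e"
  proof (intro exI allI impI)
    fix m n assume "m \<ge> N" "n \<ge> N"
    have "cnorm (s m - s n) \<le> cnorm (s m - l) + cnorm (l - s n)" by (rule cnorm_triangle_diff)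
    also have "\<dots> < e"
    proof -
      have "cnorm (s m - l) < e/2" "cnorm (s n - l) < e/2" using N \<open>m \<ge> N\<close> \<open>n \<ge> N\<close> by auto
      thus ?thesis using cnorm_minus_commute[of l "s n"] by linarith
    qed
    finally show "cnorm (s m - s n) < e" .
  qed
qed

lemma conv_null_comparison:
  assumes "\<And>n. cnorm (s n - l) \<le> g n" "g \<longlonglongrightarrow> 0" shows "conv s l"
  unfolding conv_def
  by (rule null_comp[OF _ assms(2)]) (simp add: abs_of_nonneg[OF cnorm_ge0] assms(1))

lemma conv_const: "conv (\<lambda>n. l) l" unfolding conv_def by simp

lemma conv_add: assumes "conv s l" "conv t m" shows "conv (\<lambda>n. s n + t n) (l + m)"
proof (rule conv_null_comparison)
  show "cnorm (s n + t n - (l + m)) \<le> cnorm (s n - l) + cnorm (t n - m)" for n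
    using cnorm_triangle[of "s n - l" "t n - m"] by (simp add: algebra_simps)
  show "(\<lambda>n. cnorm (s n - l) + cnorm (t n - m)) \<longlonglongrightarrow> 0"
    using tendsto_add[OF assms[unfolded conv_def]] by simp
qed

lemma conv_scaleC: assumes "conv s l" shows "conv (\<lambda>n. scaleC c (s n)) (scaleC c l)"
proof (rule conv_null_comparison)
  show "cnorm (scaleC c (s n) - scaleC c l) \<le> cmod c * cnorm (s n - l)" for n
    by (simp add: scaleC_diff_right[symmetric] cnorm_scaleC)
  show "(\<lambda>n. cmod c * cnorm (s n - l)) \<longlonglongrightarrow> 0"
    using tendsto_mult[OF tendsto_const assms[unfolded conv_def], of "cmod c"] by simp
qed

lemma conv_unique: assumes "conv s l" "conv s m" shows "l = m"
proof -
  have "(\<lambda>n. cnorm (s n - l) + cnorm (s n - m)) \<longlonglongrightarrow> 0"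
    using tendsto_add[OF assms[unfolded conv_def]] by simp
  moreover have "cnorm (l - m) \<le> cnorm (s n - l) + cnorm (s n - m)" for n
    using cnorm_triangle_diff[of l m "s n"] cnorm_minus_commute[of l "s n"] by simp
  ultimately have "cnorm (l - m) \<le> 0"
    by (intro tendsto_le[OF _ _ tendsto_const, of sequentially]) auto
  hence "cnorm (l - m) = 0" using cnorm_ge0[of "l - m"] by linarith
  hence "l - m = 0" by (simp only: cnorm_eq_zero)
  thus ?thesis by simp
qed

lemma conv_cinner: assumes "conv s l" "conv t m"
  shows "(\<lambda>n. cinner (s n) (t n)) \<longlonglongrightarrow> cinner l m"
proof -
  let ?a = "\<lambda>n. cnorm (s n - l)" and ?b = "\<lambda>n. cnorm (t n - m)"
  have a: "?a \<longlonglongrightarrow> 0" and b: "?b \<longlonglongrightarrow> 0" using assms unfolding conv_def by auto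
  have bound: "norm (cinner (s n) (t n) - cinner l m) \<le> ?a n * (?b n + cnorm m) + cnorm l * ?b n" for n
  proof -
    have e: "cinner (s n) (t n) - cinner l m = cinner (s n - l) (t n) + cinner l (t n - m)"
      by (simp add: cinner_diff_left cinner_diff_right)
    have "cnorm (t n) \<le> ?b n + cnorm m" using cnorm_triangle[of "t n - m" m] by simp
    hence 2: "?a n * cnorm (t n) \<le> ?a n * (?b n + cnorm m)" by (rule mult_left_mono[OF _ cnorm_ge0])
    have 1: "cmod (cinner (s n - l) (t n)) \<le> ?a n * cnorm (t n)" by (rule cinner_le_cnorm)
    have 3: "cmod (cinner l (t n - m)) \<le> cnorm l * ?b n" by (rule cinner_le_cnorm)
    have 4: "cmod (cinner (s n - l) (t n) + cinner l (t n - m)) \<le> cmod (cinner (s n - l) (t n)) + cmod (cinner l (t n - m))"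
      by (rule norm_triangle_ineq)
    show ?thesis unfolding e using 1 2 3 4 by linarith
  qed
  have "(\<lambda>n. ?a n * (?b n + cnorm m) + cnorm l * ?b n) \<longlonglongrightarrow> 0 * (0 + cnorm m) + cnorm l * 0"
    by (rule tendsto_add[OF tendsto_mult[OF a tendsto_add[OF b tendsto_const]] tendsto_mult[OF tendsto_const b]])
  hence "(\<lambda>n. ?a n * (?b n + cnorm m) + cnorm l * ?b n) \<longlonglongrightarrow> 0" by simp
  hence "(\<lambda>n. cinner (s n) (t n) - cinner l m) \<longlonglongrightarrow> 0"
    by (rule null_comp[OF bound])
  hence "(\<lambda>n. cinner (s n) (t n) - cinner l m + cinner l m) \<longlonglongrightarrow> 0 + cinner l m"
    by (intro tendsto_add tendsto_const)
  thus ?thesis by simp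
qed

lemma dense_seq: assumes "cdense D" shows "\<exists>s. (\<forall>n. s n \<in> D) \<and> conv s v"
proof -
  have "\<forall>n::nat. \<exists>d. d \<in> D \<and> cnorm (v - d) < inverse (real (Suc n))"
  proof
    fix n :: nat
    have "inverse (real (Suc n)) > 0" by simp
    then obtain d where "d \<in> D" "cnorm (v - d) < inverse (real (Suc n))"
      using assms unfolding cdense_def by blast
    thus "\<exists>d. d \<in> D \<and> cnorm (v - d) < inverse (real (Suc n))" by blast
  qed
  from choice[OF this] obtain s where s: "\<forall>n. s n \<in> D \<and> cnorm (v - s n) < inverse (real (Suc n))"
    by blast
  have "conv s v"
  proof (rule conv_null_comparison)
    show "cnorm (s n - v) \<le> inverse (real (Suc n))" for n
    proof -
      have "cnorm (v - s n) < inverse (real (Suc n))" using s by blast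
      thus ?thesis using cnorm_minus_commute[of v "s n"] by linarith
    qed
    show "(\<lambda>n. inverse (real (Suc n))) \<longlonglongrightarrow> 0" by (rule LIMSEQ_inverse_real_of_nat)
  qed
  thus ?thesis using s by blast
qed

lemma dense_eq: assumes "cdense D" "\<forall>d\<in>D. cinner u d = cinner v d" shows "u = v"
proof -
  obtain s where s: "\<forall>n. s n \<in> D" "conv s (u - v)" using dense_seq[OF assms(1)] by blast
  have "(\<lambda>n. cinner (u - v) (s n)) \<longlonglongrightarrow> cinner (u - v) (u - v)"
    by (rule conv_cinner[OF conv_const s(2)])
  moreover have "cinner (u - v) (s n) = 0" for n using assms(2) s(1) by (simp add: cinner_diff_left)
  ultimately have "(\<lambda>n. 0) \<longlonglongrightarrow> cinner (u - v) (u - v)" by simp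
  hence "cinner (u - v) (u - v) = 0" using LIMSEQ_unique[OF _ tendsto_const] by metis
  thus ?thesis by simp
qed



lemma quad_bound:
  fixes N b e :: real
  assumes N: "N \<ge> 0" and h: "\<And>t. t^2 * N + 2 * t * b + e \<ge> 0"
  shows "b^2 \<le> e * (N + 1)"
proof -
  define t where "t = - b / (N + 1)"
  have N1: "N + 1 > 0" using N by simp
  have tt: "t * (N + 1) = - b" unfolding t_def using N1 by simp
  have "(N+1)^2 * (t^2 * N + 2 * t * b + e) \<ge> 0" using h[of t] by simp
  moreover have "(N+1)^2 * (t^2 * N + 2 * t * b + e) = (t * (N+1))^2 * N + 2 * (t * (N+1)) * (N+1) * b + e * (N+1)^2"
    by (simp add: power2_eq_square algebra_simps)
  ultimately have "0 \<le> b^2 * N - 2 * b^2 * (N + 1) + e * (N+1)^2"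
    unfolding tt by (simp add: power2_eq_square algebra_simps)
  hence 1: "b^2 * (N + 2) \<le> e * (N+1)^2" by (simp add: power2_eq_square algebra_simps)
  have e0: "e \<ge> 0" using h[of 0] by simp
  have "e * (N+1) * (N+1) \<le> e * (N + 1) * (N + 2)" by (rule mult_left_mono) (use e0 N in auto)
  hence "e * (N+1)^2 \<le> e * (N + 1) * (N + 2)" by (simp add: power2_eq_square mult.assoc)
  hence "b^2 * (N + 2) \<le> (e * (N + 1)) * (N + 2)" using 1 by simp
  thus ?thesis using N by (simp add: mult_le_cancel_right)
qed

lemma riesz:
  fixes g :: "'b::cvec \<Rightarrow> 'h::chilbert" and L :: "'b \<Rightarrow> complex"
  assumes g_add: "\<And>a b. g (a + b) = g a + g b"
    and g_scale: "\<And>c a. g (scaleC c a) = scaleC c (g a)"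
    and L_add: "\<And>a b. L (a + b) = L a + L b"
    and L_scale: "\<And>c a. L (scaleC c a) = cnj c * L a"
    and Cpos: "C > 0"
    and bnd: "\<And>a. (cmod (L a))^2 \<le> C * Re (cinner (g a) (g a))"
  shows "\<exists>w. \<forall>a. cinner w (g a) = L a"
proof -
  define N where "N a = Re (cinner (g a) (g a))" for a
  define J where "J a = N a - 2 * Re (L a)" for a
  have N0: "N a \<ge> 0" for a unfolding N_def by (rule cinner_ge_zero)
  have Jlow: "J a \<ge> - C" for a
  proof -
    let ?n = "cnorm (g a)" and ?s = "sqrt C"
    have nn: "N a = ?n^2" unfolding N_def by (simp add: cnorm_sq)
    have ss: "?s^2 = C" using Cpos by simp
    have "(cmod (L a))^2 \<le> (?s * ?n)^2" using bnd[of a] nn ss unfolding N_def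
      by (simp add: power_mult_distrib)
    moreover have "0 \<le> ?s * ?n" using Cpos cnorm_ge0[of "g a"] by simp
    ultimately have "cmod (L a) \<le> ?s * ?n" by (rule power2_le_imp_le)
    hence "Re (L a) \<le> ?s * ?n" using complex_Re_le_cmod[of "L a"] by linarith
    moreover have "(?n - ?s)^2 \<ge> 0" by simp
    moreover have "(?n - ?s)^2 = ?n^2 - 2 * (?s * ?n) + ?s^2" by (simp add: power2_eq_square algebra_simps)
    ultimately show ?thesis unfolding J_def nn using ss by linarith
  qed
  define m where "m = Inf (range J)"
  have bdd: "bdd_below (range J)" using Jlow by (intro bdd_belowI2) auto
  have Jm: "m \<le> J a" for a unfolding m_def by (rule cInf_lower[OF _ bdd]) simp
  have "\<forall>k::nat. \<exists>a. J a < m + inverse (real (Suc k))"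
  proof
    fix k :: nat
    have "Inf (range J) < m + inverse (real (Suc k))" unfolding m_def by simp
    thus "\<exists>a. J a < m + inverse (real (Suc k))"
      by (subst (asm) cInf_less_iff[OF _ bdd]) auto
  qed
  from choice[OF this] obtain a where a: "\<And>k. J (a k) < m + inverse (real (Suc k))" by blast
  define eps where "eps k = inverse (real (Suc k))" for k :: nat
  have eps0: "eps k > 0" for k unfolding eps_def by simp
  have para: "(cnorm (g x - g y))^2 = 2 * J x + 2 * J y - 4 * J (scaleC (1/2) (x + y))" for x y
  proof -
    let ?u = "g x" and ?v = "g y"
    have gm: "g (scaleC (1/2) (x + y)) = scaleC (1/2) (?u + ?v)" by (simp add: g_scale g_add)
    have Lm: "L (scaleC (1/2) (x + y)) = (1/2) * (L x + L y)" by (simp add: L_scale L_add)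
    have pc: "cinner (?u - ?v) (?u - ?v) + cinner (?u + ?v) (?u + ?v) = 2 * cinner ?u ?u + 2 * cinner ?v ?v"
      by (simp add: cinner_add_left cinner_add_right cinner_diff_left cinner_diff_right)
    have hc: "cinner (scaleC (1/2) (?u + ?v)) (scaleC (1/2) (?u + ?v)) = (1/4) * cinner (?u + ?v) (?u + ?v)"
      by (simp add: cinner_scaleC_left cinner_scaleC_right)
    have "Re (cinner (?u - ?v) (?u - ?v)) + Re (cinner (?u + ?v) (?u + ?v)) = 2 * N x + 2 * N y"
      using arg_cong[OF pc, of Re] unfolding N_def by simp
    moreover have "N (scaleC (1/2) (x + y)) = (1/4) * Re (cinner (?u + ?v) (?u + ?v))"
      unfolding N_def gm hc by simp
    moreover have "Re (L (scaleC (1/2) (x + y))) = (1/2) * (Re (L x) + Re (L y))" unfolding Lm by simp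
    ultimately show ?thesis unfolding J_def by (simp add: cnorm_sq)
  qed
  have cd: "(cnorm (g (a k) - g (a j)))^2 \<le> 2 * eps k + 2 * eps j" for k j
    using para[of "a k" "a j"] a[of k] a[of j] Jm[of "scaleC (1/2) (a k + a j)"]
    unfolding eps_def by linarith
  have "ccauchy (\<lambda>k. g (a k))" unfolding ccauchy_def
  proof (intro allI impI)
    fix e :: real assume e: "e > 0"
    obtain K where K: "inverse (real (Suc K)) < e^2 / 4" using reals_Archimedean[of "e^2/4"] e by auto
    show "\<exists>N. \<forall>m\<ge>N. \<forall>n\<ge>N. cnorm (g (a m) - g (a n)) < e"
    proof (intro exI allI impI)
      fix k j assume "K \<le> k" "K \<le> j"
      hence "eps k \<le> inverse (real (Suc K))" "eps j \<le> inverse (real (Suc K))"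
        unfolding eps_def by (auto intro!: le_imp_inverse_le)
      hence "(cnorm (g (a k) - g (a j)))^2 < e^2" using cd[of k j] K by linarith
      thus "cnorm (g (a k) - g (a j)) < e" by (rule power_less_imp_less_base) (use e in simp)
    qed
  qed
  then obtain w where w: "conv (\<lambda>k. g (a k)) w" using conv_complete by blast
  have Jvar: "J (x + scaleC (complex_of_real t) y) = J x + 2 * t * (Re (cinner (g x) (g y)) - Re (L y)) + t^2 * N y"
    for x y t
  proof -
    have c: "cinner (g x + scaleC (complex_of_real t) (g y)) (g x + scaleC (complex_of_real t) (g y))
       = cinner (g x) (g x) + complex_of_real t * cinner (g x) (g y) + complex_of_real t * cinner (g y) (g x)
         + complex_of_real t * complex_of_real t * cinner (g y) (g y)"
      by (simp add: cinner_add_left cinner_add_right cinner_scaleC_left cinner_scaleC_right algebra_simps)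
    have r: "Re (cinner (g y) (g x)) = Re (cinner (g x) (g y))"
      by (subst cinner_commute) simp
    have "N (x + scaleC (complex_of_real t) y) = N x + 2 * t * Re (cinner (g x) (g y)) + t^2 * N y"
      unfolding N_def g_add g_scale c using r by (simp add: power2_eq_square)
    moreover have "Re (L (x + scaleC (complex_of_real t) y)) = Re (L x) + t * Re (L y)"
      by (simp add: L_add L_scale)
    ultimately show ?thesis unfolding J_def by (simp add: algebra_simps)
  qed
  have re_eq: "Re (cinner w (g y)) = Re (L y)" for y
  proof -
    define \<beta> where "\<beta> k = Re (cinner (g (a k)) (g y)) - Re (L y)" for k
    have qb: "(\<beta> k)^2 \<le> eps k * (N y + 1)" for k
    proof (rule quad_bound[OF N0])
      fix t :: real
      have "J (a k) < m + eps k" using a[of k] unfolding eps_def .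
      moreover have "m \<le> J (a k + scaleC (complex_of_real t) y)" by (rule Jm)
      ultimately show "t^2 * N y + 2 * t * \<beta> k + eps k \<ge> 0"
        unfolding Jvar \<beta>_def by (simp add: algebra_simps)
    qed
    have lim1: "(\<lambda>k. sqrt (eps k * (N y + 1))) \<longlonglongrightarrow> 0"
    proof -
      have "(\<lambda>k. sqrt (eps k * (N y + 1))) \<longlonglongrightarrow> sqrt (0 * (N y + 1))"
        unfolding eps_def by (intro tendsto_real_sqrt tendsto_mult LIMSEQ_inverse_real_of_nat tendsto_const)
      thus ?thesis by simp
    qed
    have "norm (\<beta> k) \<le> sqrt (eps k * (N y + 1))" for k
      using qb[of k] by (simp add: real_le_rsqrt)
    hence b0: "\<beta> \<longlonglongrightarrow> 0" by (rule null_comp[OF _ lim1])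
    have "(\<lambda>k. \<beta> k + Re (L y)) \<longlonglongrightarrow> 0 + Re (L y)" by (intro tendsto_add b0 tendsto_const)
    hence l1: "(\<lambda>k. Re (cinner (g (a k)) (g y))) \<longlonglongrightarrow> Re (L y)" unfolding \<beta>_def by simp
    have "(\<lambda>k. cinner (g (a k)) (g y)) \<longlonglongrightarrow> cinner w (g y)"
      by (rule conv_cinner[OF w conv_const])
    hence l2: "(\<lambda>k. Re (cinner (g (a k)) (g y))) \<longlonglongrightarrow> Re (cinner w (g y))" by (rule tendsto_Re)
    show ?thesis using LIMSEQ_unique[OF l2 l1] .
  qed
  have "cinner w (g y) = L y" for y
  proof (rule complex_eqI)
    show "Re (cinner w (g y)) = Re (L y)" by (rule re_eq)
    have "Re (cinner w (g (scaleC \<i> y))) = Re (L (scaleC \<i> y))" by (rule re_eq)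
    thus "Im (cinner w (g y)) = Im (L y)" by (simp add: g_scale L_scale cinner_scaleC_right)
  qed
  thus ?thesis by blast
qed



lemma dense_seq_pre: assumes "cdense (range g)" shows "\<exists>s. conv (\<lambda>n. g (s n)) v"
proof -
  obtain t where t: "\<forall>n. t n \<in> range g" "conv t v" using dense_seq[OF assms] by blast
  have "\<forall>n. \<exists>a. g a = t n" using t(1) by (metis image_iff)
  from choice[OF this] obtain s where "\<forall>n. g (s n) = t n" by blast
  hence "(\<lambda>n. g (s n)) = t" by auto
  thus ?thesis using t(2) by auto
qed

lemma lin_diff:
  fixes p :: "'b::ab_group_add \<Rightarrow> 'c::ab_group_add"
  assumes "\<And>a b. p (a + b) = p a + p b" shows "p (a - b) = p a - p b"
proof -
  have "p (a - b) + p b = p a" using assms[of "a - b" b] by simp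
  thus ?thesis by (simp add: eq_diff_eq)
qed

lemma conv_cnorm_sum3:
  assumes "conv s l" "(\<lambda>n. x n) \<longlonglongrightarrow> 0" "(\<lambda>n. y n) \<longlonglongrightarrow> 0" "(\<lambda>n. z n) \<longlonglongrightarrow> (0::real)"
  shows "(\<lambda>n. x n + y n + z n) \<longlonglongrightarrow> 0"
  using tendsto_add[OF tendsto_add[OF assms(2) assms(3)] assms(4)] by simp

lemma unitary_extend:
  fixes q :: "'b::cvec \<Rightarrow> 'h::chilbert" and p :: "'b \<Rightarrow> 'k::chilbert"
  assumes q_add: "\<And>a b. q (a + b) = q a + q b"
    and q_scale: "\<And>c a. q (scaleC c a) = scaleC c (q a)"
    and p_add: "\<And>a b. p (a + b) = p a + p b"
    and p_scale: "\<And>c a. p (scaleC c a) = scaleC c (p a)"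
    and ip: "\<And>a b. cinner (p a) (p b) = cinner (q a) (q b)"
    and dq: "cdense (range q)" and dp: "cdense (range p)"
  shows "\<exists>U. cunitary U \<and> (\<forall>a. U (q a) = p a)"
proof -
  have pd: "cnorm (p a - p b) = cnorm (q a - q b)" for a b
    unfolding cnorm_def lin_diff[of p, OF p_add, symmetric] lin_diff[of q, OF q_add, symmetric] ip ..
  have pc: "ccauchy (\<lambda>n. p (s n))" if "conv (\<lambda>n. q (s n)) v" for s v
    using conv_cauchy[OF that] unfolding ccauchy_def pd .
  define U where "U v = (SOME l. \<exists>s. conv (\<lambda>n. q (s n)) v \<and> conv (\<lambda>n. p (s n)) l)" for v
  have Uconv: "conv (\<lambda>n. p (s n)) (U v)" if s: "conv (\<lambda>n. q (s n)) v" for s v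
  proof -
    obtain s0 where s0: "conv (\<lambda>n. q (s0 n)) v" using dense_seq_pre[OF dq] by blast
    obtain l0 where "conv (\<lambda>n. p (s0 n)) l0" using conv_complete[OF pc[OF s0]] by blast
    hence "\<exists>l s. conv (\<lambda>n. q (s n)) v \<and> conv (\<lambda>n. p (s n)) l" using s0 by blast
    hence "\<exists>s. conv (\<lambda>n. q (s n)) v \<and> conv (\<lambda>n. p (s n)) (U v)"
      unfolding U_def by (rule someI_ex[where P="\<lambda>l. \<exists>s. conv (\<lambda>n. q (s n)) v \<and> conv (\<lambda>n. p (s n)) l", OF exE]) blast
    then obtain s1 where s1: "conv (\<lambda>n. q (s1 n)) v" "conv (\<lambda>n. p (s1 n)) (U v)" by blast
    show ?thesis
    proof (rule conv_null_comparison)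
      show "cnorm (p (s n) - U v) \<le> cnorm (q (s n) - v) + cnorm (q (s1 n) - v) + cnorm (p (s1 n) - U v)" for n
      proof -
        have "cnorm (p (s n) - U v) \<le> cnorm (p (s n) - p (s1 n)) + cnorm (p (s1 n) - U v)"
          by (rule cnorm_triangle_diff)
        moreover have "cnorm (q (s n) - q (s1 n)) \<le> cnorm (q (s n) - v) + cnorm (v - q (s1 n))"
          by (rule cnorm_triangle_diff)
        moreover have "cnorm (v - q (s1 n)) = cnorm (q (s1 n) - v)" by (rule cnorm_minus_commute)
        ultimately show ?thesis unfolding pd by linarith
      qed
      show "(\<lambda>n. cnorm (q (s n) - v) + cnorm (q (s1 n) - v) + cnorm (p (s1 n) - U v)) \<longlonglongrightarrow> 0"
        using tendsto_add[OF tendsto_add[OF s[unfolded conv_def] s1(1)[unfolded conv_def]] s1(2)[unfolded conv_def]]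
        by simp
    qed
  qed
  have Uq: "U (q a) = p a" for a
    using conv_unique[OF Uconv[OF conv_const[of "q a"]] conv_const] .
  have Uadd: "U (u + v) = U u + U v" for u v
  proof -
    obtain s where s: "conv (\<lambda>n. q (s n)) u" using dense_seq_pre[OF dq] by blast
    obtain t where t: "conv (\<lambda>n. q (t n)) v" using dense_seq_pre[OF dq] by blast
    have "conv (\<lambda>n. q (s n + t n)) (u + v)" unfolding q_add by (rule conv_add[OF s t])
    hence "conv (\<lambda>n. p (s n + t n)) (U (u + v))" by (rule Uconv)
    hence 1: "conv (\<lambda>n. p (s n) + p (t n)) (U (u + v))" unfolding p_add .
    have 2: "conv (\<lambda>n. p (s n) + p (t n)) (U u + U v)" by (rule conv_add[OF Uconv[OF s] Uconv[OF t]])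
    show ?thesis using conv_unique[OF 1 2] .
  qed
  have Uscale: "U (scaleC c u) = scaleC c (U u)" for c u
  proof -
    obtain s where s: "conv (\<lambda>n. q (s n)) u" using dense_seq_pre[OF dq] by blast
    have "conv (\<lambda>n. q (scaleC c (s n))) (scaleC c u)" unfolding q_scale by (rule conv_scaleC[OF s])
    hence "conv (\<lambda>n. p (scaleC c (s n))) (U (scaleC c u))" by (rule Uconv)
    hence 1: "conv (\<lambda>n. scaleC c (p (s n))) (U (scaleC c u))" unfolding p_scale .
    have 2: "conv (\<lambda>n. scaleC c (p (s n))) (scaleC c (U u))" by (rule conv_scaleC[OF Uconv[OF s]])
    show ?thesis using conv_unique[OF 1 2] .
  qed
  have Uinner: "cinner (U u) (U v) = cinner u v" for u v
  proof -
    obtain s where s: "conv (\<lambda>n. q (s n)) u" using dense_seq_pre[OF dq] by blast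
    obtain t where t: "conv (\<lambda>n. q (t n)) v" using dense_seq_pre[OF dq] by blast
    have 1: "(\<lambda>n. cinner (p (s n)) (p (t n))) \<longlonglongrightarrow> cinner (U u) (U v)"
      by (rule conv_cinner[OF Uconv[OF s] Uconv[OF t]])
    have 2: "(\<lambda>n. cinner (p (s n)) (p (t n))) \<longlonglongrightarrow> cinner u v"
      unfolding ip by (rule conv_cinner[OF s t])
    show ?thesis using LIMSEQ_unique[OF 1 2] .
  qed
  have "inj U"
  proof (rule injI)
    fix u v assume e: "U u = U v"
    have "U (u - v) = U u - U v" by (rule lin_diff[of U, OF Uadd])
    hence "U (u - v) = 0" using e by simp
    hence "cinner (u - v) (u - v) = 0" using Uinner[of "u - v" "u - v"] by simp
    thus "u = v" by simp
  qed
  moreover have "surj U"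
  proof -
    have "k \<in> range U" for k
    proof -
      obtain s where s: "conv (\<lambda>n. p (s n)) k" using dense_seq_pre[OF dp] by blast
      have "ccauchy (\<lambda>n. q (s n))" using conv_cauchy[OF s] unfolding ccauchy_def pd .
      then obtain v where v: "conv (\<lambda>n. q (s n)) v" using conv_complete by blast
      have "U v = k" using conv_unique[OF Uconv[OF v] s] .
      thus ?thesis by blast
    qed
    thus ?thesis by blast
  qed
  ultimately have "cunitary U" unfolding cunitary_def bij_def using Uadd Uscale Uinner by blast
  thus ?thesis using Uq by blast
qed


theorem theorem5p1:
  fixes lact :: "'a::cstar_algebra \<Rightarrow> 'x::cvec \<Rightarrow> 'x"
    and ract :: "'x \<Rightarrow> 'a \<Rightarrow> 'x"
    and xst :: "'x \<Rightarrow> 'x"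
    and F :: "'x \<Rightarrow> complex"
    and f :: "'a \<Rightarrow> complex"
    and q :: "'a \<Rightarrow> 'h::chilbert"
  assumes bimod: "star_bimodule lact ract xst"
    and F_lin: "clinear_functional F"
    and F_herm: "\<forall>x. F (xst x) = cnj (F x)"
    and f_lin: "clinear_functional f"
    and f_pos: "positive_functional f"
    and bound: "\<forall>x. \<exists>C::real. C > 0 \<and>
                   (\<forall>a. (cmod (F (lact (star a) x)))\<^sup>2 \<le> C * Re (f (star a * a)))"
    and gns: "gns_completion f q"
  shows "(\<exists>\<theta>F :: 'x \<Rightarrow> 'h \<Rightarrow> 'h.
            bimod_star_rep lact ract xst (range q) \<theta>F (gns_rep q) \<and>
            (\<forall>a b x. F (lact a (ract x b)) =
                cinner (\<theta>F x (gns_rep q b (gns_vec q))) (gns_rep q (star a) (gns_vec q))))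
       \<and>
         (\<forall>\<theta>F :: 'x \<Rightarrow> 'h \<Rightarrow> 'h.
            bimod_star_rep lact ract xst (range q) \<theta>F (gns_rep q) \<and>
            (\<forall>a b x. F (lact a (ract x b)) =
                cinner (\<theta>F x (gns_rep q b (gns_vec q))) (gns_rep q (star a) (gns_vec q)))
          \<longrightarrow>
            (\<forall>(D :: 'k::chilbert set) (\<theta> :: 'x \<Rightarrow> 'k \<Rightarrow> 'k) (\<rho> :: 'a \<Rightarrow> 'k \<Rightarrow> 'k) \<psi>.
               dense_domain D \<and> bimod_star_rep lact ract xst D \<theta> \<rho> \<and> \<psi> \<in> D \<and>
               (\<lambda>a. \<rho> a \<psi>) ` UNIV = D \<and>
               (\<forall>a. f a = cinner (\<rho> a \<psi>) \<psi>) \<and>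
               (\<forall>a b x. F (lact a (ract x b)) = cinner (\<theta> x (\<rho> b \<psi>)) (\<rho> (star a) \<psi>))
             \<longrightarrow>
               (\<exists>U :: 'h \<Rightarrow> 'k. cunitary U \<and> U (gns_vec q) = \<psi> \<and> U ` range q = D \<and>
                  (\<forall>a. \<forall>v\<in>D. \<rho> a v = U (gns_rep q a (inv U v))) \<and>
                  (\<forall>x. \<forall>v\<in>D. \<theta> x v = U (\<theta>F x (inv U v))))))"
proof -
  note bm = bimod[unfolded star_bimodule_def]
  note la_addx = bm[THEN conjunct1, rule_format]
  note la_adda = bm[THEN conjunct2, THEN conjunct1, rule_format]
  note la_scalea = bm[THEN conjunct2, THEN conjunct2, THEN conjunct1, rule_format]
  note la_scalex = bm[THEN conjunct2, THEN conjunct2, THEN conjunct2, THEN conjunct1, rule_format]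
  note la_mult = bm[THEN conjunct2, THEN conjunct2, THEN conjunct2, THEN conjunct2, THEN conjunct1, rule_format]
  note la_one = bm[THEN conjunct2, THEN conjunct2, THEN conjunct2, THEN conjunct2, THEN conjunct2, THEN conjunct1, rule_format]
  note ra_addx = bm[THEN conjunct2, THEN conjunct2, THEN conjunct2, THEN conjunct2, THEN conjunct2, THEN conjunct2, THEN conjunct1, rule_format]
  note ra_adda = bm[THEN conjunct2, THEN conjunct2, THEN conjunct2, THEN conjunct2, THEN conjunct2, THEN conjunct2, THEN conjunct2, THEN conjunct1, rule_format]
  note ra_scalea = bm[THEN conjunct2, THEN conjunct2, THEN conjunct2, THEN conjunct2, THEN conjunct2, THEN conjunct2, THEN conjunct2, THEN conjunct2, THEN conjunct1, rule_format]
  note ra_scalex = bm[THEN conjunct2, THEN conjunct2, THEN conjunct2, THEN conjunct2, THEN conjunct2, THEN conjunct2, THEN conjunct2, THEN conjunct2, THEN conjunct2, THEN conjunct1, rule_format]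
  note ra_mult = bm[THEN conjunct2, THEN conjunct2, THEN conjunct2, THEN conjunct2, THEN conjunct2, THEN conjunct2, THEN conjunct2, THEN conjunct2, THEN conjunct2, THEN conjunct2, THEN conjunct1, rule_format]
  note ra_one = bm[THEN conjunct2, THEN conjunct2, THEN conjunct2, THEN conjunct2, THEN conjunct2, THEN conjunct2, THEN conjunct2, THEN conjunct2, THEN conjunct2, THEN conjunct2, THEN conjunct2, THEN conjunct1, rule_format]
  note assoc = bm[THEN conjunct2, THEN conjunct2, THEN conjunct2, THEN conjunct2, THEN conjunct2, THEN conjunct2, THEN conjunct2, THEN conjunct2, THEN conjunct2, THEN conjunct2, THEN conjunct2, THEN conjunct2, THEN conjunct1, rule_format]
  note xst_inv = bm[THEN conjunct2, THEN conjunct2, THEN conjunct2, THEN conjunct2, THEN conjunct2, THEN conjunct2, THEN conjunct2, THEN conjunct2, THEN conjunct2, THEN conjunct2, THEN conjunct2, THEN conjunct2, THEN conjunct2, THEN conjunct1, rule_format]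
  note xst_add = bm[THEN conjunct2, THEN conjunct2, THEN conjunct2, THEN conjunct2, THEN conjunct2, THEN conjunct2, THEN conjunct2, THEN conjunct2, THEN conjunct2, THEN conjunct2, THEN conjunct2, THEN conjunct2, THEN conjunct2, THEN conjunct2, THEN conjunct1, rule_format]
  note xst_scale = bm[THEN conjunct2, THEN conjunct2, THEN conjunct2, THEN conjunct2, THEN conjunct2, THEN conjunct2, THEN conjunct2, THEN conjunct2, THEN conjunct2, THEN conjunct2, THEN conjunct2, THEN conjunct2, THEN conjunct2, THEN conjunct2, THEN conjunct2, THEN conjunct1, rule_format]
  note xst_bm = bm[THEN conjunct2, THEN conjunct2, THEN conjunct2, THEN conjunct2, THEN conjunct2, THEN conjunct2, THEN conjunct2, THEN conjunct2, THEN conjunct2, THEN conjunct2, THEN conjunct2, THEN conjunct2, THEN conjunct2, THEN conjunct2, THEN conjunct2, THEN conjunct2, rule_format]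
  have F_add: "\<And>x y. F (x + y) = F x + F y" using F_lin unfolding clinear_functional_def by blast
  have F_scale: "\<And>c x. F (scaleC c x) = c * F x" using F_lin unfolding clinear_functional_def by blast
  have q_add: "\<And>a b. q (a + b) = q a + q b" using gns unfolding gns_completion_def by blast
  have q_scale: "\<And>c a. q (scaleC c a) = scaleC c (q a)" using gns unfolding gns_completion_def by blast
  have q_ip: "\<And>a b. cinner (q a) (q b) = f (star b * a)" using gns unfolding gns_completion_def by blast
  have q_dense: "cdense (range q)" using gns unfolding gns_completion_def by blast
  have q_diff: "\<And>a b. q (a - b) = q a - q b" by (rule lin_diff[of q, OF q_add])
  have F_diff: "\<And>u v. F (u - v) = F u - F v" by (rule lin_diff[of F, OF F_add])
  have la_diffx: "\<And>a u v. lact a (u - v) = lact a u - lact a v" by (rule lin_diff[of "lact a" for a, OF la_addx])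
  have ra_diffa: "\<And>x a b. ract x (a - b) = ract x a - ract x b" by (rule lin_diff[of "ract x" for x, OF ra_adda])
  have q_wd: "q (a * b) = q (a * b')" if "q b = q b'" for a b b'
  proof -
    define d where "d = b - b'"
    have qd: "q d = 0" unfolding d_def q_diff using that by simp
    have "star (a * d) * (a * d) = star (star a * a * d) * d" by (simp add: star_mult star_star mult.assoc)
    hence "cinner (q (a * d)) (q (a * d)) = cinner (q d) (q (star a * a * d))" unfolding q_ip by simp
    hence "q (a * d) = 0" unfolding qd by simp
    thus ?thesis unfolding d_def right_diff_distrib q_diff by simp
  qed
  have gr: "gns_rep q a (q b) = q (a * b)" for a b
  proof -
    have "q (SOME b'. q b' = q b) = q b" by (rule someI[of "\<lambda>b'. q b' = q b"]) (rule refl)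
    thus ?thesis unfolding gns_rep_def by (rule q_wd)
  qed
  have gv: "gns_rep q b (gns_vec q) = q b" for b unfolding gns_vec_def gr by simp
  have ueq: "u = v" if "\<And>c. cinner u (q c) = cinner v (q c)" for u v :: 'h
    by (rule dense_eq[OF q_dense]) (use that in auto)
  have Fz: "F (lact (star c) (ract x d)) = 0" if "q d = 0" for c x d
  proof -
    obtain C where C: "C > 0" "\<forall>a. (cmod (F (lact (star a) (ract (xst x) c))))\<^sup>2 \<le> C * Re (f (star a * a))"
      using bound by blast
    have "f (star d * d) = 0" using q_ip[of d d] that by simp
    moreover have "(cmod (F (lact (star d) (ract (xst x) c))))\<^sup>2 \<le> C * Re (f (star d * d))" using C(2) by blast
    ultimately have "(cmod (F (lact (star d) (ract (xst x) c))))\<^sup>2 \<le> 0" by simp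
    hence "(cmod (F (lact (star d) (ract (xst x) c))))\<^sup>2 = 0"
      using zero_le_power2[of "cmod (F (lact (star d) (ract (xst x) c)))"] by linarith
    hence "F (lact (star d) (ract (xst x) c)) = 0" by simp
    moreover have "xst (lact (star c) (ract x d)) = lact (star d) (ract (xst x) c)" by (simp add: xst_bm star_star)
    ultimately have "F (xst (lact (star c) (ract x d))) = 0" by simp
    thus ?thesis using F_herm by (metis complex_cnj_zero_iff)
  qed
  have FWD: "F (lact (star c) (ract x b)) = F (lact (star c) (ract x b'))" if "q b = q b'" for c x b b'
  proof -
    have "q (b - b') = 0" unfolding q_diff using that by simp
    hence "F (lact (star c) (ract x (b - b'))) = 0" by (rule Fz)
    thus ?thesis unfolding ra_diffa la_diffx F_diff by simp
  qed
  have rz: "\<exists>w. \<forall>c. cinner w (q c) = F (lact (star c) (ract x b))" for x b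
  proof -
    obtain C where C: "C > 0" "\<forall>a. (cmod (F (lact (star a) (ract x b))))\<^sup>2 \<le> C * Re (f (star a * a))"
      using bound by blast
    show ?thesis
    proof (rule riesz[of q "\<lambda>c. F (lact (star c) (ract x b))" C])
      show "q (a + b) = q a + q b" for a b by (rule q_add)
      show "q (scaleC c a) = scaleC c (q a)" for c a by (rule q_scale)
      show "F (lact (star (a + b')) (ract x b)) = F (lact (star a) (ract x b)) + F (lact (star b') (ract x b))" for a b'
        by (simp add: star_add la_adda F_add)
      show "F (lact (star (scaleC c a)) (ract x b)) = cnj c * F (lact (star a) (ract x b))" for c a
        by (simp add: star_scaleC la_scalea F_scale)
      show "C > 0" by (rule C(1))
      show "(cmod (F (lact (star a) (ract x b))))\<^sup>2 \<le> C * Re (cinner (q a) (q a))" for a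
        using C(2) q_ip[of a a] by simp
    qed
  qed
  define W where "W x b = (SOME w. \<forall>c. cinner w (q c) = F (lact (star c) (ract x b)))" for x b
  have W: "cinner (W x b) (q c) = F (lact (star c) (ract x b))" for x b c
    using someI_ex[OF rz[of x b]] unfolding W_def by blast
  define thF where "thF x v = W x (SOME b. q b = v)" for x v
  have thF: "cinner (thF x (q b)) (q c) = F (lact (star c) (ract x b))" for x b c
  proof -
    have "q (SOME b'. q b' = q b) = q b" by (rule someI[of "\<lambda>b'. q b' = q b"]) (rule refl)
    thus ?thesis unfolding thF_def W by (rule FWD)
  qed
  have F_xst: "F (xst z) = cnj (F z)" for z using F_herm by blast
  have adjI: "cinner (thF x (q b)) (q c) = cinner (q b) (thF (xst x) (q c))" for x b c
  proof -
    have "cinner (q b) (thF (xst x) (q c)) = cnj (cinner (thF (xst x) (q c)) (q b))" by (rule cinner_commute)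
    also have "\<dots> = cnj (F (lact (star b) (ract (xst x) c)))" unfolding thF ..
    also have "\<dots> = F (xst (lact (star b) (ract (xst x) c)))" by (simp add: F_xst)
    also have "\<dots> = F (lact (star c) (ract x b))" by (simp add: xst_bm star_star xst_inv)
    finally show ?thesis unfolding thF by simp
  qed
  show ?thesis
  proof (intro conjI)
    show "\<exists>\<theta>F :: 'x \<Rightarrow> 'h \<Rightarrow> 'h.
            bimod_star_rep lact ract xst (range q) \<theta>F (gns_rep q) \<and>
            (\<forall>a b x. F (lact a (ract x b)) =
                cinner (\<theta>F x (gns_rep q b (gns_vec q))) (gns_rep q (star a) (gns_vec q)))"
    proof (rule exI[of _ thF], unfold bimod_star_rep_def, intro conjI)
      have sr1: "\<forall>a. \<forall>v\<in>range q. gns_rep q a v \<in> range q" by (auto simp: gr)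
      have sr2: "\<forall>a. clinear_on (range q) (gns_rep q a)"
        unfolding clinear_on_def
        by (auto simp: gr q_add[symmetric] q_scale[symmetric] distrib_left scaleC_mult_right[symmetric])
      have sr3: "\<forall>a b. \<forall>v\<in>range q. gns_rep q (a + b) v = gns_rep q a v + gns_rep q b v"
        by (auto simp: gr q_add[symmetric] distrib_right)
      have sr4: "\<forall>c a. \<forall>v\<in>range q. gns_rep q (scaleC c a) v = scaleC c (gns_rep q a v)"
        by (auto simp: gr q_scale[symmetric] scaleC_mult_left[symmetric])
      have sr5: "\<forall>a b. \<forall>v\<in>range q. gns_rep q (a * b) v = gns_rep q a (gns_rep q b v)"
        by (auto simp: gr mult.assoc)
      have sr6: "\<forall>a. \<forall>\<phi>\<in>range q. \<forall>\<psi>\<in>range q. cinner (gns_rep q a \<phi>) \<psi> = cinner \<phi> (gns_rep q (star a) \<psi>)"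
        by (auto simp: gr q_ip star_mult star_star mult.assoc)
      show "star_rep (range q) (gns_rep q)" unfolding star_rep_def
        using sr1 sr2 sr3 sr4 sr5 sr6 by (intro conjI) assumption+
      show "nondegenerate (range q) (gns_rep q)" unfolding nondegenerate_def by (auto simp: gr)
      show "\<forall>x y. \<forall>v\<in>range q. thF (x + y) v = thF x v + thF y v"
      proof (intro allI ballI)
        fix x y v assume "v \<in> range q"
        then obtain b where v: "v = q b" by blast
        show "thF (x + y) v = thF x v + thF y v" unfolding v
          by (rule ueq) (simp add: thF cinner_add_left ra_addx la_addx F_add)
      qed
      show "\<forall>c x. \<forall>v\<in>range q. thF (scaleC c x) v = scaleC c (thF x v)"
      proof (intro allI ballI)
        fix c x v assume "v \<in> range q"
        then obtain b where v: "v = q b" by blast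
        show "thF (scaleC c x) v = scaleC c (thF x v)" unfolding v
          by (rule ueq) (simp add: thF cinner_scaleC_left ra_scalex la_scalex F_scale)
      qed
      show "\<forall>x. Lplus (range q) (thF x)" unfolding Lplus_def clinear_on_def adj_domain_def
      proof (intro allI conjI ballI subsetI CollectI)
        fix x u v assume "u \<in> range q" "v \<in> range q"
        then obtain b b' where uv: "u = q b" "v = q b'" by blast
        show "thF x (u + v) = thF x u + thF x v" unfolding uv q_add[symmetric]
          by (rule ueq) (simp add: thF cinner_add_left ra_adda la_addx F_add)
      next
        fix x c u assume "u \<in> range q"
        then obtain b where uv: "u = q b" by blast
        show "thF x (scaleC c u) = scaleC c (thF x u)" unfolding uv q_scale[symmetric]
          by (rule ueq) (simp add: thF cinner_scaleC_left ra_scalea la_scalex F_scale)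
      next
        fix x \<psi> assume "\<psi> \<in> range q"
        then obtain c where \<psi>: "\<psi> = q c" by blast
        show "\<exists>\<eta>. \<forall>\<phi>\<in>range q. cinner (thF x \<phi>) \<psi> = cinner \<phi> \<eta>"
          by (rule exI[of _ "thF (xst x) (q c)"]) (auto simp: \<psi> adjI)
      qed
      show "\<forall>x. \<forall>\<psi>\<in>range q. thF (xst x) \<psi> = adjoint (range q) (thF x) \<psi>"
      proof (intro allI ballI)
        fix x \<psi> assume "\<psi> \<in> range q"
        then obtain c where \<psi>: "\<psi> = q c" by blast
        show "thF (xst x) \<psi> = adjoint (range q) (thF x) \<psi>" unfolding adjoint_def
        proof (rule the_equality[symmetric])
          show "\<forall>\<phi>\<in>range q. cinner (thF x \<phi>) \<psi> = cinner \<phi> (thF (xst x) \<psi>)"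
            by (auto simp: \<psi> adjI)
        next
          fix \<eta> assume h: "\<forall>\<phi>\<in>range q. cinner (thF x \<phi>) \<psi> = cinner \<phi> \<eta>"
          show "\<eta> = thF (xst x) \<psi>"
          proof (rule ueq)
            fix b
            have "cinner (q b) \<eta> = cinner (q b) (thF (xst x) \<psi>)" using h adjI unfolding \<psi> by auto
            hence "cnj (cinner \<eta> (q b)) = cnj (cinner (thF (xst x) \<psi>) (q b))"
              by (metis cinner_commute)
            thus "cinner \<eta> (q b) = cinner (thF (xst x) \<psi>) (q b)" by simp
          qed
        qed
      qed
      show "\<forall>a b x. \<forall>\<phi>\<in>range q. \<forall>\<psi>\<in>range q.
        cinner (thF (lact a (ract x b)) \<phi>) \<psi> = cinner (thF x (gns_rep q b \<phi>)) (gns_rep q (star a) \<psi>)"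
      proof (intro allI ballI)
        fix a b x \<phi> \<psi> assume "\<phi> \<in> range q" "\<psi> \<in> range q"
        then obtain d e where de: "\<phi> = q d" "\<psi> = q e" by blast
        show "cinner (thF (lact a (ract x b)) \<phi>) \<psi> = cinner (thF x (gns_rep q b \<phi>)) (gns_rep q (star a) \<psi>)"
          unfolding de gr thF by (simp add: star_mult star_star la_mult assoc ra_mult)
      qed
      show "\<forall>a b x. F (lact a (ract x b)) = cinner (thF x (gns_rep q b (gns_vec q))) (gns_rep q (star a) (gns_vec q))"
        by (simp add: gv thF star_star)
    qed
  next
    show "\<forall>\<theta>F :: 'x \<Rightarrow> 'h \<Rightarrow> 'h.
            bimod_star_rep lact ract xst (range q) \<theta>F (gns_rep q) \<and>
            (\<forall>a b x. F (lact a (ract x b)) =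
                cinner (\<theta>F x (gns_rep q b (gns_vec q))) (gns_rep q (star a) (gns_vec q)))
          \<longrightarrow>
            (\<forall>(D :: 'k::chilbert set) (\<theta> :: 'x \<Rightarrow> 'k \<Rightarrow> 'k) (\<rho> :: 'a \<Rightarrow> 'k \<Rightarrow> 'k) \<psi>.
               dense_domain D \<and> bimod_star_rep lact ract xst D \<theta> \<rho> \<and> \<psi> \<in> D \<and>
               (\<lambda>a. \<rho> a \<psi>) ` UNIV = D \<and>
               (\<forall>a. f a = cinner (\<rho> a \<psi>) \<psi>) \<and>
               (\<forall>a b x. F (lact a (ract x b)) = cinner (\<theta> x (\<rho> b \<psi>)) (\<rho> (star a) \<psi>))
             \<longrightarrow>
               (\<exists>U :: 'h \<Rightarrow> 'k. cunitary U \<and> U (gns_vec q) = \<psi> \<and> U ` range q = D \<and>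
                  (\<forall>a. \<forall>v\<in>D. \<rho> a v = U (gns_rep q a (inv U v))) \<and>
                  (\<forall>x. \<forall>v\<in>D. \<theta> x v = U (\<theta>F x (inv U v)))))"
    proof (intro allI impI)
      fix \<theta>F :: "'x \<Rightarrow> 'h \<Rightarrow> 'h" and D :: "'k set" and \<theta> :: "'x \<Rightarrow> 'k \<Rightarrow> 'k" and \<rho> :: "'a \<Rightarrow> 'k \<Rightarrow> 'k" and \<psi>
      assume h1: "bimod_star_rep lact ract xst (range q) \<theta>F (gns_rep q) \<and>
            (\<forall>a b x. F (lact a (ract x b)) =
                cinner (\<theta>F x (gns_rep q b (gns_vec q))) (gns_rep q (star a) (gns_vec q)))"
      assume h2: "dense_domain D \<and> bimod_star_rep lact ract xst D \<theta> \<rho> \<and> \<psi> \<in> D \<and>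
               (\<lambda>a. \<rho> a \<psi>) ` UNIV = D \<and>
               (\<forall>a. f a = cinner (\<rho> a \<psi>) \<psi>) \<and>
               (\<forall>a b x. F (lact a (ract x b)) = cinner (\<theta> x (\<rho> b \<psi>)) (\<rho> (star a) \<psi>))"
      have thFf: "cinner (\<theta>F x (q b)) (q c) = F (lact (star c) (ract x b))" for x b c
        using h1 gv star_star by metis
      have Dd: "cdense D" using h2 unfolding dense_domain_def by blast
      have psiD: "\<psi> \<in> D" using h2 by blast
      have rng: "range (\<lambda>a. \<rho> a \<psi>) = D" using h2 by blast
      have fa: "\<And>a. f a = cinner (\<rho> a \<psi>) \<psi>" using h2 by blast
      have thf: "cinner (\<theta> x (\<rho> b \<psi>)) (\<rho> c \<psi>) = F (lact (star c) (ract x b))" for x b c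
        using h2 star_star by metis
      have sr: "star_rep D \<rho>" and nd: "nondegenerate D \<rho>" using h2 unfolding bimod_star_rep_def by blast+
      have r_in: "\<And>a v. v \<in> D \<Longrightarrow> \<rho> a v \<in> D" using sr unfolding star_rep_def by blast
      have r_add: "\<And>a b v. v \<in> D \<Longrightarrow> \<rho> (a + b) v = \<rho> a v + \<rho> b v" using sr unfolding star_rep_def by blast
      have r_scale: "\<And>c a v. v \<in> D \<Longrightarrow> \<rho> (scaleC c a) v = scaleC c (\<rho> a v)" using sr unfolding star_rep_def by blast
      have r_mult: "\<And>a b v. v \<in> D \<Longrightarrow> \<rho> (a * b) v = \<rho> a (\<rho> b v)" using sr unfolding star_rep_def by blast
      have r_ip: "\<And>a u v. u \<in> D \<Longrightarrow> v \<in> D \<Longrightarrow> cinner (\<rho> a u) v = cinner u (\<rho> (star a) v)"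
        using sr unfolding star_rep_def by blast
      have r_one: "\<rho> 1 \<psi> = \<psi>" using nd psiD unfolding nondegenerate_def by blast
      have ip: "cinner (\<rho> a \<psi>) (\<rho> b \<psi>) = cinner (q a) (q b)" for a b
      proof -
        have "cinner (\<rho> a \<psi>) (\<rho> b \<psi>) = cinner (\<rho> (star b) (\<rho> a \<psi>)) \<psi>"
          using r_ip[of "\<rho> a \<psi>" \<psi> "star b"] r_in psiD by (simp add: star_star)
        also have "\<dots> = f (star b * a)" using fa r_mult psiD by simp
        finally show ?thesis using q_ip by simp
      qed
      obtain U where U: "cunitary U" "\<And>a. U (q a) = \<rho> a \<psi>"
        using unitary_extend[of q "\<lambda>a. \<rho> a \<psi>"] q_add q_scale r_add r_scale psiD ip q_dense Dd rng by auto
      have injU: "inj U" using U(1) unfolding cunitary_def bij_def by blast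
      have Uip: "cinner (U u) (U v) = cinner u v" for u v using U(1) unfolding cunitary_def by blast
      have invq: "inv U (\<rho> b \<psi>) = q b" for b using inv_f_f[OF injU, of "q b"] U(2) by simp
      have vD: "\<exists>b. v = \<rho> b \<psi>" if "v \<in> D" for v using that rng by auto
      show "\<exists>U :: 'h \<Rightarrow> 'k. cunitary U \<and> U (gns_vec q) = \<psi> \<and> U ` range q = D \<and>
                  (\<forall>a. \<forall>v\<in>D. \<rho> a v = U (gns_rep q a (inv U v))) \<and>
                  (\<forall>x. \<forall>v\<in>D. \<theta> x v = U (\<theta>F x (inv U v)))"
      proof (intro exI conjI allI ballI)
        show "cunitary U" by (rule U(1))
        show "U (gns_vec q) = \<psi>" unfolding gns_vec_def U(2) by (rule r_one)
        show "U ` range q = D" using rng U(2) by (simp add: image_image)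
        fix v assume "v \<in> D"
        then obtain b where v: "v = \<rho> b \<psi>" using vD by blast
        {
          fix a
          show "\<rho> a v = U (gns_rep q a (inv U v))" unfolding v invq gr U(2) using r_mult psiD by simp
        }
        fix x
        show "\<theta> x v = U (\<theta>F x (inv U v))" unfolding v invq
        proof (rule dense_eq[OF Dd], intro ballI)
          fix e assume "e \<in> D"
          then obtain c where e: "e = \<rho> c \<psi>" using vD by blast
          show "cinner (\<theta> x (\<rho> b \<psi>)) e = cinner (U (\<theta>F x (q b))) e"
            unfolding e U(2)[symmetric] Uip thFf using thf[of x b c] U(2) by simp
        qed
      qed
    qed
  qed
qed

end
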